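(* Let $f_V^0(u)=(32u^2-1)\cos2u+\cos6u-8u\sin2u$ and let $F[f_V^0]=\inf\{u>0:f_V^0(u)=0\}$ be its first positive root. Then $F[f_V^0]\in(\frac58\pi,\frac34\pi)$, $f_V^0$ has a simple root at $F[f_V^0]$, and $f_V^0(u)<0$ for all $u\in(0,F[f_V^0])$. *)

theory Defs
  imports Complex_Main
begin

definition fV0 :: "real \<Rightarrow> real" where
  "fV0 u = (32 * u^2 - 1) * cos (2*u) + cos (6*u) - 8 * u * sin (2*u)"

definition F_fV0 :: real where
  "F_fV0 = Inf {u. u > 0 \<and> fV0 u = 0}"

end

theory Submission
  imports Defs
begin

lemma cos_lb6: fixes x :: real assumes "0 < x" shows "1 - x^2/2 + x^4/24 - x^6/720 \<le> cos x"
proof -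
  obtain t where t: "0 < t" "t < x" "cos x = (\<Sum>m<6. cos_coeff m * x ^ m) + (cos (t + 1/2 * real 6 * pi) / fact 6) * x ^ 6"
    using Maclaurin_cos_expansion2[of x 6] assms by auto
  have "t + 1/2 * real 6 * pi = (t + pi) + 2*pi" by simp
  then have "cos (t + 1/2 * real 6 * pi) = cos (t + pi)" by (simp only: cos_periodic)
  then have "cos (t + 1/2 * real 6 * pi) = - cos t" by simp
  moreover have "cos t \<le> 1" by simp
  moreover have "(\<Sum>m<6. cos_coeff m * x ^ m) = 1 - x^2/2 + x^4/24"
    by (simp add: cos_coeff_def lessThan_nat_numeral fact_numeral)
  moreover have "x^6 \<ge> 0" using assms by simp
  ultimately show ?thesis using t(3) assms by (simp add: fact_numeral mult_left_le)
qed
lemma pi_gt3: "pi > 3"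
proof (rule ccontr)
  assume "\<not> pi > 3"
  then have "pi/2 \<le> 3/2" by simp
  then have "cos (3/2) \<le> cos (pi/2)" using pi_ge_two by (intro cos_monotone_0_pi_le) auto
  then have "cos (3/2::real) \<le> 0" by simp
  moreover have "1 - (3/2)^2/2 + (3/2)^4/24 - (3/2)^6/720 \<le> cos (3/2::real)" by (rule cos_lb6) simp
  ultimately show False by (simp add: power_divide)
qed
lemma sin_lb: assumes "0 < x" "x < pi" shows "x - x^3/6 \<le> sin x"
proof -
  obtain t where t: "0 < t" "t < x" "sin x = (\<Sum>m<4. sin_coeff m * x ^ m) + (sin (t + 1/2 * real 4 * pi) / fact 4) * x ^ 4"
    using Maclaurin_sin_expansion3[of 4 x] assms by auto
  have "sin (t + 1/2 * real 4 * pi) = sin t"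
    using sin_periodic[of t] by (simp add: algebra_simps)
  moreover have "sin t \<ge> 0" using t assms by (intro sin_ge_zero) auto
  moreover have "(\<Sum>m<4. sin_coeff m * x ^ m) = x - x^3/6"
    by (simp add: sin_coeff_def lessThan_nat_numeral fact_numeral)
  ultimately show ?thesis using t(3) assms by (simp add: fact_numeral)
qed

lemma cos_ub: assumes "0 < x" "x < pi" shows "cos x \<le> 1 - x^2/2 + x^4/24"
proof -
  obtain t where t: "0 < t" "t < x" "cos x = (\<Sum>m<5. cos_coeff m * x ^ m) + (cos (t + 1/2 * real 5 * pi) / fact 5) * x ^ 5"
    using Maclaurin_cos_expansion2[of x 5] assms by auto
  have "cos (t + 1/2 * real 5 * pi) = - sin t"
  proof -
    have "t + 1/2 * real 5 * pi = (t + pi/2) + 2*pi" by simp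
    then have "cos (t + 1/2 * real 5 * pi) = cos (t + pi/2)" by (simp only: cos_periodic)
    then show ?thesis by (simp add: cos_add)
  qed
  moreover have "sin t \<ge> 0" using t assms by (intro sin_ge_zero) auto
  moreover have "(\<Sum>m<5. cos_coeff m * x ^ m) = 1 - x^2/2 + x^4/24"
    by (simp add: cos_coeff_def lessThan_nat_numeral fact_numeral)
  ultimately show ?thesis using t(3) assms by (simp add: fact_numeral)
qed

lemma fV0_alt: "fV0 u = 4 * (2 * (2*u)^2 * cos (2*u) - cos (2*u) * sin (2*u)^2 - (2*u) * sin (2*u))"
proof -
  define c where "c = cos (2*u)"
  define s where "s = sin (2*u)"
  have h1: "cos (6*u) = 4 * c ^ 3 - 3 * c"
    using cos_treble_cos[of "2*u"] unfolding c_def by (simp add: mult.assoc)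
  have h2: "s^2 = 1 - c^2" unfolding s_def c_def by (simp add: sin_squared_eq)
  have "fV0 u = (32 * u^2 - 1) * c + (4 * c ^ 3 - 3 * c) - 8 * u * s"
    unfolding fV0_def h1 c_def s_def by simp
  also have "\<dots> = 4 * (2 * (2*u)^2 * c - c * (1 - c^2) - (2*u) * s)"
    by algebra
  also have "\<dots> = 4 * (2 * (2*u)^2 * c - c * s^2 - (2*u) * s)" by (simp add: h2)
  finally show ?thesis unfolding c_def s_def .
qed

definition hh :: "real \<Rightarrow> real" where
  "hh x = 2 * x^2 * cos x - cos x * sin x^2 - x * sin x"

lemma hh_neg1: assumes "0 < x" "x < pi/2" shows "hh x < 0"
proof -
  have p3: "pi > 3" by (rule pi_gt3)
  define s where "s = sin x"
  define c where "c = cos x"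
  have x2: "x < 2" using assms p3 pi_less_4 by linarith
  have sl: "x - x^3/6 \<le> s" unfolding s_def using sin_lb[of x] assms by simp
  have cu: "c \<le> 1 - x^2/2 + x^4/24" unfolding c_def using cos_ub[of x] assms by simp
  have cpos: "c > 0" unfolding c_def using assms by (intro cos_gt_zero_pi) auto
  have spos: "s > 0" unfolding s_def using assms by (intro sin_gt_zero) auto
  have lpos: "x - x^3/6 > 0"
  proof -
    have "x^2 < 4" using mult_strict_mono[of x 2 x 2] x2 assms by (simp add: power2_eq_square)
    then have "x^3 < 4 * x" using assms by (simp add: power3_eq_cube power2_eq_square)
    then show ?thesis using assms by simp
  qed
  have s3: "(x - x^3/6)^3 \<le> s^3" using sl lpos by (intro power_mono) auto
  have poly: "(x - x^3/6)^3 > x^3 * (1 - x^2/2 + x^4/24)"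
  proof -
    define y where "y = x^2"
    have y0: "y > 0" "y < 4" unfolding y_def using assms x2 mult_strict_mono[of x 2 x 2]
      by (simp_all add: power2_eq_square)
    have "(x - x^3/6)^3 - x^3 * (1 - x^2/2 + x^4/24) = x^3 * y^2 * (1/24 - y/216)"
      unfolding y_def by (simp add: field_simps) algebra
    moreover have "x^3 * y^2 * (1/24 - y/216) > 0" using y0 assms by (intro mult_pos_pos) auto
    ultimately show ?thesis by linarith
  qed
  have key: "s^3 > x^3 * c"
  proof -
    have "x^3 * c \<le> x^3 * (1 - x^2/2 + x^4/24)" using cu assms by (intro mult_left_mono) auto
    then show ?thesis using poly s3 by linarith
  qed
  define A where "A = x * s"
  define B where "B = c * s^2"
  have AB0: "(A + B)^2 - 4 * A * B = (A - B)^2" by (simp add: power2_eq_square algebra_simps)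
  have AB: "(A + B)^2 \<ge> 4 * A * B" using AB0 zero_le_power2[of "A - B"] by linarith
  have "4 * A * B = 4 * x * c * s^3" unfolding A_def B_def by (simp add: power2_eq_square power3_eq_cube)
  also have "\<dots> > 4 * x * c * (x^3 * c)" using key assms cpos by (intro mult_strict_left_mono) auto
  also have "4 * x * c * (x^3 * c) = (2 * x^2 * c)^2" by (simp add: power2_eq_square power3_eq_cube)
  finally have "(2 * x^2 * c)^2 < (A + B)^2" using AB by linarith
  moreover have "A + B \<ge> 0" unfolding A_def B_def using assms spos cpos by simp
  ultimately have "2 * x^2 * c < A + B" using power_less_imp_less_base by blast
  then show ?thesis unfolding hh_def A_def B_def s_def c_def by simp
qed

lemma hh_neg2: assumes "pi/2 \<le> x" "x \<le> pi" shows "hh x < 0"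
proof -
  have p3: "pi > 3" by (rule pi_gt3)
  have c: "cos x \<le> 0" using assms cos_monotone_0_pi_le[of "pi/2" x] by simp
  have s: "sin x \<ge> 0" using assms by (intro sin_ge_zero) auto
  have s1: "sin x \<le> 1" by simp
  have x15: "x \<ge> 3/2" using assms p3 by linarith
  have "sin x ^2 \<le> 1" using s s1 by (simp add: power_le_one)
  moreover have "x^2 \<ge> 2" using x15 mult_mono[of "3/2" x "3/2" x] by (simp add: power2_eq_square)
  ultimately have pos: "2 * x^2 - sin x^2 > 0" by linarith
  have e: "hh x = cos x * (2 * x^2 - sin x^2) - x * sin x" unfolding hh_def by (simp add: algebra_simps)
  show ?thesis
  proof (cases "x < pi")
    case True
    then have "sin x > 0" using assms p3 by (intro sin_gt_zero) auto
    then have "x * sin x > 0" using x15 by simp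
    moreover have "cos x * (2 * x^2 - sin x^2) \<le> 0" using c pos by (simp add: mult_nonpos_nonneg)
    ultimately show ?thesis using e by linarith
  next
    case False
    then have "x = pi" using assms by simp
    then show ?thesis using e pos by simp
  qed
qed

lemma hh_neg3: assumes "pi \<le> x" "x \<le> 5/4*pi" shows "hh x < 0"
proof -
  have p3: "pi > 3" by (rule pi_gt3)
  define y where "y = x - pi"
  have y: "0 \<le> y" "y \<le> pi/3" unfolding y_def using assms p3 by auto
  have "cos y \<ge> cos (pi/3)" using y by (intro cos_monotone_0_pi_le) auto
  then have cy: "cos y \<ge> 1/2" by (simp add: cos_60)
  have cx: "cos x = - cos y" unfolding y_def by (simp add: cos_diff)
  have sa: "\<bar>sin x\<bar> \<le> 1" by simp
  have "sin x ^2 \<le> 1" by (simp add: abs_square_le_1)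
  have x3: "x \<ge> 3" using assms p3 by linarith
  have x2: "x^2 \<ge> 9" using x3 mult_mono[of 3 x 3 x] by (simp add: power2_eq_square)
  have e: "hh x = cos x * (2 * x^2 - sin x^2) - x * sin x" unfolding hh_def by (simp add: algebra_simps)
  have "cos x * (2 * x^2 - sin x^2) \<le> cos x * (2 * x^2 - 1)"
    using cx cy \<open>sin x ^2 \<le> 1\<close> by (intro mult_left_mono_neg) auto
  also have "\<dots> \<le> - (1/2) * (2 * x^2 - 1)" using cx cy x2 by (intro mult_right_mono) auto
  also have "- (1/2) * (2 * x^2 - 1) = 1/2 - x^2" by (simp add: algebra_simps)
  finally have "cos x * (2 * x^2 - sin x^2) \<le> 1/2 - x^2" .
  moreover have "- (x * sin x) \<le> x"
    using mult_left_mono[of "-1" "sin x" x] x3 by simp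
  moreover have "x^2 \<ge> x * 3" using x3 by (simp add: power2_eq_square mult_left_mono)
  ultimately show ?thesis using e x3 by linarith
qed

lemma fV0_neg: assumes "0 < u" "u \<le> 5/8*pi" shows "fV0 u < 0"
proof -
  have "hh (2*u) < 0"
  proof -
    have "2*u < pi/2 \<or> (pi/2 \<le> 2*u \<and> 2*u \<le> pi) \<or> (pi \<le> 2*u \<and> 2*u \<le> 5/4*pi)"
      using assms by auto
    then show ?thesis using hh_neg1[of "2*u"] hh_neg2[of "2*u"] hh_neg3[of "2*u"] assms by auto
  qed
  then show ?thesis unfolding fV0_alt hh_def by simp
qed

definition DD :: "real \<Rightarrow> real" where
  "DD u = 48 * u * cos (2*u) - (64 * u^2 + 6) * sin (2*u) - 6 * sin (6*u)"

lemma fV0_deriv: "(fV0 has_real_derivative DD u) (at u)"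
proof -
  have "((\<lambda>u. (32 * u^2 - 1) * cos (2*u) + cos (6*u) - 8 * u * sin (2*u)) has_real_derivative DD u) (at u)"
    unfolding DD_def
    apply (rule derivative_eq_intros refl)+
    apply (simp add: algebra_simps)
    done
  then show ?thesis unfolding fV0_def[abs_def] by simp
qed

lemma DD_pos: assumes "5/8*pi \<le> u" "u \<le> 3/4*pi" shows "DD u > 0"
proof -
  have p3: "pi > 3" by (rule pi_gt3)
  define y where "y = 2*u - pi"
  have y: "pi/4 \<le> y" "y \<le> pi/2" unfolding y_def using assms by auto
  have "sin (pi/4) \<le> sin y" using y by (intro sin_monotone_2pi_le) auto
  moreover have "sqrt 2 \<ge> 7/5" by (rule real_le_rsqrt) (simp add: power2_eq_square)
  ultimately have sy: "sin y \<ge> 7/10" by (simp add: sin_45)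
  have s2: "sin (2*u) = - sin y" unfolding y_def by (simp add: sin_diff)
  have u1: "u \<ge> 15/8" using assms p3 by linarith
  have t1: "48 * u * cos (2*u) \<ge> -(48 * u)"
    using mult_left_mono[of "-1" "cos (2*u)" "48*u"] u1 by simp
  have "(64 * u^2 + 6) * (7/10) \<le> (64 * u^2 + 6) * sin y" using sy by (intro mult_left_mono) auto
  moreover have "- ((64 * u^2 + 6) * sin (2*u)) = (64 * u^2 + 6) * sin y" unfolding s2 by (simp add: algebra_simps)
  moreover have "(64 * u^2 + 6) * (7/10) = 224/5 * u^2 + 21/5" by (simp add: field_simps)
  ultimately have t2: "(64 * u^2 + 6) * sin (2*u) \<le> -(224/5 * u^2) - 21/5" by linarith
  have t3: "sin (6*u) \<le> 1" by simp
  have t4: "u^2 \<ge> 15/8 * u" using u1 by (simp add: power2_eq_square mult_right_mono)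
  have lin: "\<And>W Q T V. W \<ge> -(48*u) \<Longrightarrow> Q \<le> -(224/5*V) - 21/5 \<Longrightarrow> T \<le> 1 \<Longrightarrow> V \<ge> 15/8*u
     \<Longrightarrow> u \<ge> 15/8 \<Longrightarrow> W - Q - 6*T > (0::real)" by linarith
  show ?thesis unfolding DD_def using lin[OF t1 t2 t3 t4 u1] .
qed

theorem lemma5p2:
  shows "F_fV0 \<in> {5/8*pi<..<3/4*pi}
    \<and> fV0 F_fV0 = 0
    \<and> (\<exists>d. (fV0 has_real_derivative d) (at F_fV0) \<and> d \<noteq> 0)
    \<and> (\<forall>u. 0 < u \<and> u < F_fV0 \<longrightarrow> fV0 u < 0)"
proof -
  define a where "a = 5/8*pi"
  define b where "b = 3/4*pi"
  have ab: "0 < a" "a < b" unfolding a_def b_def by auto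
  have fa: "fV0 a < 0" using fV0_neg[of a] ab by (simp add: a_def)
  have fb: "fV0 b > 0"
  proof -
    have e1: "2*b = pi/2 + pi" unfolding b_def by simp
    have "cos (2*b) = cos (pi/2 + pi)" "sin (2*b) = sin (pi/2 + pi)" using e1 by (rule arg_cong)+
    then have h1: "cos (2*b) = 0" "sin (2*b) = -1"
      by (simp_all only: cos_periodic_pi sin_periodic_pi cos_pi_half sin_pi_half)
    have e2: "6*b = (pi/2 + 2 * pi) + 2 * pi" unfolding b_def by simp
    have "cos (6*b) = cos ((pi/2 + 2 * pi) + 2 * pi)" using e2 by (rule arg_cong)
    then have h2: "cos (6*b) = 0" by (simp only: cos_periodic cos_pi_half)
    note h1 h2
    then show ?thesis unfolding fV0_def using ab by simp
  qed
  have cont: "continuous_on {a..b} fV0"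
    using fV0_deriv by (intro continuous_at_imp_continuous_on ballI DERIV_isCont) auto
  obtain r where r: "a \<le> r" "r \<le> b" "fV0 r = 0"
    using IVT'[of fV0 a 0 b] fa fb ab cont by auto
  have rab: "a < r" "r < b" using r fa fb by (auto simp: order.order_iff_strict)
  have neg: "fV0 u < 0" if "0 < u" "u < r" for u
  proof (cases "u \<le> a")
    case True
    then show ?thesis using fV0_neg that by (simp add: a_def)
  next
    case False
    have der: "\<exists>y. DERIV fV0 x :> y \<and> y > 0" if "u \<le> x" "x \<le> r" for x
      using that fV0_deriv DD_pos[of x] False r by (auto simp: a_def b_def)
    have "fV0 u < fV0 r"
      using DERIV_pos_imp_increasing[of u r fV0] der \<open>u < r\<close> by blast
    then show ?thesis using r by simp
  qed
  have F: "F_fV0 = r"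
    unfolding F_fV0_def
  proof (rule cInf_eq_minimum)
    show "r \<in> {u. 0 < u \<and> fV0 u = 0}" using r ab by auto
    fix x assume "x \<in> {u. 0 < u \<and> fV0 u = 0}"
    then show "r \<le> x" using neg[of x] by force
  qed
  have "DD r > 0" using DD_pos[of r] rab by (simp add: a_def b_def)
  then show ?thesis unfolding F using rab r neg fV0_deriv[of r] by (auto simp: a_def b_def)
qed

end
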